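(* Let $\mathcal{B}$ be a complete topological ring and let $\mathrm{e}=\sum_{i\in\mathbb{N}}\mathrm{e}_iT^i\colon\mathcal{B}\to\mathcal{B}\{T\}$ be a restricted exponential homomorphism. Then: (a) $\mathcal{B}^{\mathrm{e}}$ is a complete topological subring of $\mathcal{B}$. (b) For every $i\ge1$, $\mathrm{e}_i\colon\mathcal{B}\to\mathcal{B}$ is a homomorphism of topological $\mathcal{B}^{\mathrm{e}}$-modules. (c) If $\mathcal{B}$ admits a fundamental system $(\mathfrak{b}_n)_{n\in\mathbb{N}}$ of open ideals consisting of prime ideals of $\mathcal{B}$, then $\mathcal{B}^{\mathrm{e}}$ is factorially closed in $\mathcal{B}$; in particular every invertible element of $\mathcal{B}$ is contained in $\mathcal{B}^{\mathrm{e}}$.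
   Context: Conventions: topological rings are linearly topologized with a countable fundamental system of open ideals; homomorphisms are continuous; complete means the canonical map to $\varprojlim_{\mathfrak{a}}\mathcal{B}/\mathfrak{a}$ (open ideals, discrete quotients) is a topological isomorphism. $\mathcal{B}\{T\}$, $\mathcal{B}\{T,T'\}$ denote restricted power series over $\mathcal{B}$ (coefficients converging to $0$), topologized by the ideals of series with all coefficients in a given open ideal. A restricted exponential homomorphism is a continuous ring homomorphism $\mathrm{e}\colon\mathcal{B}\to\mathcal{B}\{T\}$, $\mathrm{e}(b)=\sum_i\mathrm{e}_i(b)T^i$, with $\mathrm{e}_0=\mathrm{id}_{\mathcal{B}}$ and $\sum_{i,j}\mathrm{e}_j(\mathrm{e}_i(b))T'^jT^i=\sum_\ell\mathrm{e}_\ell(b)(T+T')^\ell$ for all $b$. Its ring of invariants is $\mathcal{B}^{\mathrm{e}}=\{b\in\mathcal{B}:\mathrm{e}(b)=b\}$ (i.e. $b$ equals its image as a constant series), with the induced topology. A subring $R\subseteq\mathcal{B}$ is factorially closed if $b,b'\in\mathcal{B}$ and $bb'\in R\setminus\{0\}$ imply $b,b'\in R$. *)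

theory Defs
  imports Main
begin

text \<open>A ring is modelled as a carrier set
  S inside a type of class comm_ring_1 (S = UNIV for the ambient ring B; S = B^e for
  the subring of invariants).  A topology is given by a countable fundamental
  system of open ideals I :: nat => 'a set.\<close>

definition lt_ideal :: "'a::comm_ring_1 set \<Rightarrow> 'a set \<Rightarrow> bool" where
  "lt_ideal S a \<longleftrightarrow> a \<subseteq> S \<and> 0 \<in> a \<and>
     (\<forall>x\<in>a. \<forall>y\<in>a. x + y \<in> a \<and> x - y \<in> a) \<and>
     (\<forall>s\<in>S. \<forall>x\<in>a. s * x \<in> a)"

definition lt_prime_ideal :: "'a::comm_ring_1 set \<Rightarrow> 'a set \<Rightarrow> bool" where
  "lt_prime_ideal S p \<longleftrightarrow> lt_ideal S p \<and> 1 \<notin> p \<and>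
     (\<forall>x\<in>S. \<forall>y\<in>S. x * y \<in> p \<longrightarrow> x \<in> p \<or> y \<in> p)"

definition fundamental_system :: "'a::comm_ring_1 set \<Rightarrow> (nat \<Rightarrow> 'a set) \<Rightarrow> bool" where
  "fundamental_system S I \<longleftrightarrow> (\<forall>n. lt_ideal S (I n)) \<and>
     (\<forall>n m. \<exists>k. I k \<subseteq> I n \<inter> I m)"

definition open_ideal :: "'a::comm_ring_1 set \<Rightarrow> (nat \<Rightarrow> 'a set) \<Rightarrow> 'a set \<Rightarrow> bool" where
  "open_ideal S I a \<longleftrightarrow> lt_ideal S a \<and> (\<exists>n. I n \<subseteq> a)"

text \<open>Completeness: the canonical map S -> lim_{a open} S/a is a (topological)
  isomorphism, i.e. it is injective (the open ideals intersect to 0) and every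
  compatible family (x_a)_a of residues has a preimage.  (Bijectivity already gives
  a topological isomorphism for the limit topology.)\<close>
definition lt_complete :: "'a::comm_ring_1 set \<Rightarrow> (nat \<Rightarrow> 'a set) \<Rightarrow> bool" where
  "lt_complete S I \<longleftrightarrow>
     (\<Inter>n. I n) = {0} \<and>
     (\<forall>x :: 'a set \<Rightarrow> 'a.
        (\<forall>a. open_ideal S I a \<longrightarrow> x a \<in> S) \<and>
        (\<forall>a b. open_ideal S I a \<and> open_ideal S I b \<and> a \<subseteq> b \<longrightarrow> x a - x b \<in> b)
        \<longrightarrow> (\<exists>y\<in>S. \<forall>a. open_ideal S I a \<longrightarrow> y - x a \<in> a))"

text \<open>Restricted exponential homomorphism on the ring UNIV::'a set with topology I,
  given by its coefficient maps e i = e_i.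
  Conditions: each e(b) is a restricted power series (coefficients tend to 0);
  e is a ring homomorphism B -> B{T}; e is continuous for the topology of B{T}
  (ideals of series with all coefficients in a given open ideal); e_0 = id;
  and the exponential identity, compared coefficientwise at T'^j T^i:
  e_j(e_i(b)) = binom(i+j,i) e_{i+j}(b).\<close>
definition restricted_exp :: "(nat \<Rightarrow> 'a::comm_ring_1 set) \<Rightarrow> (nat \<Rightarrow> 'a \<Rightarrow> 'a) \<Rightarrow> bool" where
  "restricted_exp I e \<longleftrightarrow>
     (\<forall>b n. \<exists>N. \<forall>i\<ge>N. e i b \<in> I n) \<and>
     (\<forall>i x y. e i (x + y) = e i x + e i y) \<and>
     (\<forall>k x y. e k (x * y) = (\<Sum>i\<le>k. e i x * e (k - i) y)) \<and>
     (\<forall>i. e i 1 = (if i = 0 then 1 else 0)) \<and>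
     (\<forall>n. \<exists>m. \<forall>b\<in>I m. \<forall>i. e i b \<in> I n) \<and>
     (\<forall>b. e 0 b = b) \<and>
     (\<forall>i j b. e j (e i b) = of_nat ((i + j) choose i) * e (i + j) b)"

definition invariants :: "(nat \<Rightarrow> 'a::comm_ring_1 \<Rightarrow> 'a) \<Rightarrow> 'a set" where
  "invariants e = {b. \<forall>i. e i b = (if i = 0 then b else 0)}"

definition is_subring :: "'a::comm_ring_1 set \<Rightarrow> bool" where
  "is_subring R \<longleftrightarrow> 0 \<in> R \<and> 1 \<in> R \<and>
     (\<forall>x\<in>R. \<forall>y\<in>R. x + y \<in> R \<and> x - y \<in> R \<and> x * y \<in> R)"

definition factorially_closed :: "'a::comm_ring_1 set \<Rightarrow> bool" where
  "factorially_closed R \<longleftrightarrow> (\<forall>b b'. b * b' \<in> R - {0} \<longrightarrow> b \<in> R \<and> b' \<in> R)"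

end

theory Submission
  imports Defs
begin

lemma ideal_sum:
  assumes "lt_ideal S a" "finite A" "\<forall>x\<in>A. h x \<in> a"
  shows "sum h A \<in> a"
  using assms(2,3)
proof (induction A rule: finite_induct)
  case empty then show ?case using assms(1) by (simp add: lt_ideal_def)
next
  case (insert x F) then show ?case using assms(1) by (simp add: lt_ideal_def)
qed

lemma ideal_neg: "lt_ideal S a \<Longrightarrow> x \<in> a \<Longrightarrow> - x \<in> a"
  unfolding lt_ideal_def by (metis diff_0)

lemma poly_prime:
  fixes f g :: "nat \<Rightarrow> 'a::comm_ring_1"
  assumes P: "lt_prime_ideal UNIV P" and ff: "finite {i. f i \<notin> P}" and fg: "finite {i. g i \<notin> P}"
    and conv: "\<forall>k\<ge>1. (\<Sum>l\<le>k. f l * g (k-l)) = 0" and c: "f 0 * g 0 \<notin> P"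
  shows "f i \<in> P \<or> i = 0"
proof (rule ccontr)
  assume a: "\<not> (f i \<in> P \<or> i = 0)"
  have id: "lt_ideal UNIV P" using P by (simp add: lt_prime_ideal_def)
  have mulP: "\<And>x y. x \<in> P \<Longrightarrow> x * y \<in> P" "\<And>x y. y \<in> P \<Longrightarrow> x * y \<in> P"
    using id unfolding lt_ideal_def by (metis UNIV_I mult.commute)+
  define i0 where "i0 = Max {i. f i \<notin> P}"
  define j0 where "j0 = Max {i. g i \<notin> P}"
  have g0: "g 0 \<notin> P" using c mulP by blast
  have i0in: "f i0 \<notin> P" unfolding i0_def using ff a Max_in[of "{i. f i \<notin> P}"] by auto
  have j0in: "g j0 \<notin> P" unfolding j0_def using fg g0 Max_in[of "{i. g i \<notin> P}"] by auto
  have ii0: "i \<le> i0" unfolding i0_def using ff a by (auto intro: Max_ge)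
  have fP: "\<And>l. l > i0 \<Longrightarrow> f l \<in> P" unfolding i0_def using Max_ge[OF ff] by (metis mem_Collect_eq not_le)
  have gP: "\<And>l. l > j0 \<Longrightarrow> g l \<in> P" unfolding j0_def using Max_ge[OF fg] by (metis mem_Collect_eq not_le)
  define k where "k = i0 + j0"
  have k1: "k \<ge> 1" unfolding k_def using a ii0 by auto
  have "(\<Sum>l\<le>k. f l * g (k-l)) = f i0 * g (k - i0) + (\<Sum>l\<in>{..k}-{i0}. f l * g (k-l))"
    by (rule sum.remove) (auto simp: k_def)
  moreover have "(\<Sum>l\<in>{..k}-{i0}. f l * g (k-l)) \<in> P"
  proof (rule ideal_sum[OF id])
    show "\<forall>x\<in>{..k} - {i0}. f x * g (k - x) \<in> P"
    proof
      fix l assume "l \<in> {..k} - {i0}"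
      then have "l > i0 \<or> (l < i0 \<and> k - l > j0)" unfolding k_def by auto
      then show "f l * g (k - l) \<in> P" using fP gP mulP by blast
    qed
  qed simp
  ultimately have "f i0 * g j0 = - (\<Sum>l\<in>{..k}-{i0}. f l * g (k-l))"
    using conv k1 by (simp add: k_def eq_neg_iff_add_eq_0 add.commute)
  then have "f i0 * g j0 \<in> P" using ideal_neg[OF id] \<open>(\<Sum>l\<in>{..k}-{i0}. f l * g (k-l)) \<in> P\<close> by simp
  then show False using P i0in j0in unfolding lt_prime_ideal_def by blast
qed

theorem proposition2p3:
  fixes I :: "nat \<Rightarrow> 'a::comm_ring_1 set" and e :: "nat \<Rightarrow> 'a \<Rightarrow> 'a"
  assumes top: "fundamental_system UNIV I"
    and compl: "lt_complete UNIV I"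
    and exp: "restricted_exp I e"
  shows
    "(is_subring (invariants e) \<and>
      fundamental_system (invariants e) (\<lambda>n. I n \<inter> invariants e) \<and>
      lt_complete (invariants e) (\<lambda>n. I n \<inter> invariants e))
   \<and> (\<forall>i\<ge>1.
        (\<forall>x y. e i (x + y) = e i x + e i y) \<and>
        (\<forall>r\<in>invariants e. \<forall>x. e i (r * x) = r * e i x) \<and>
        (\<forall>n. \<exists>m. \<forall>b\<in>I m. e i b \<in> I n))
   \<and> ((\<exists>J :: nat \<Rightarrow> 'a set. (\<forall>n. lt_prime_ideal UNIV (J n) \<and> open_ideal UNIV I (J n)) \<and>
          (\<forall>a. open_ideal UNIV I a \<longrightarrow> (\<exists>n. J n \<subseteq> a)))
       \<longrightarrow> factorially_closed (invariants e) \<and>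
           (\<forall>u. (\<exists>v. u * v = 1) \<longrightarrow> u \<in> invariants e))"
proof -
  note E = exp[unfolded restricted_exp_def]
  have add: "\<And>i x y. e i (x + y) = e i x + e i y" using E by blast
  have mul: "\<And>k x y. e k (x * y) = (\<Sum>i\<le>k. e i x * e (k - i) y)" using E by blast
  have one: "\<And>i. e i 1 = (if i = 0 then 1 else 0)" using E by blast
  have cont: "\<And>n. \<exists>m. \<forall>b\<in>I m. \<forall>i. e i b \<in> I n" using E by blast
  have e0: "\<And>b. e 0 b = b" using E by blast
  have restr: "\<And>b n. \<exists>N. \<forall>i\<ge>N. e i b \<in> I n" using E by blast
  have zero: "\<And>i. e i 0 = 0" using add[of _ 0 0] by simp
  have sub: "\<And>i x y. e i (x - y) = e i x - e i y"
    by (metis add add_diff_cancel diff_add_cancel)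
  have Iid: "\<And>n. lt_ideal UNIV (I n)" using top by (simp add: fundamental_system_def)
  have Icap: "\<And>n m. \<exists>k. I k \<subseteq> I n \<inter> I m" using top by (simp add: fundamental_system_def)
  have Iint: "(\<Inter>n. I n) = {0}" using compl by (simp add: lt_complete_def)
  let ?R = "invariants e"
  have invD: "\<And>b i. b \<in> ?R \<Longrightarrow> i \<ge> 1 \<Longrightarrow> e i b = 0" by (simp add: invariants_def)
  have invI: "\<And>b. (\<And>i. i \<ge> 1 \<Longrightarrow> e i b = 0) \<Longrightarrow> b \<in> ?R"
    by (simp add: invariants_def e0)
  have linear: "\<And>i r x. r \<in> ?R \<Longrightarrow> e i (r * x) = r * e i x"
  proof -
    fix i r x assume r: "r \<in> ?R"
    have "e i (r * x) = (\<Sum>j\<le>i. e j r * e (i - j) x)" by (rule mul)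
    also have "\<dots> = (\<Sum>j\<in>{0}. e j r * e (i - j) x)"
      by (rule sum.mono_neutral_right) (use r invD in auto)
    finally show "e i (r * x) = r * e i x" by (simp add: e0)
  qed
  have subring: "is_subring ?R"
    unfolding is_subring_def
  proof (intro conjI ballI)
    show "0 \<in> ?R" by (rule invI) (simp add: zero)
    show "1 \<in> ?R" by (rule invI) (simp add: one)
    fix x y assume x: "x \<in> ?R" and y: "y \<in> ?R"
    show "x + y \<in> ?R" by (rule invI) (simp add: add invD x y)
    show "x - y \<in> ?R" by (rule invI) (simp add: sub invD x y)
    show "x * y \<in> ?R" by (rule invI) (simp add: linear x invD y)
  qed
  have Rsub: "\<And>x y. x \<in> ?R \<Longrightarrow> y \<in> ?R \<Longrightarrow> x * y \<in> ?R \<and> x - y \<in> ?R \<and> x + y \<in> ?R"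
    using subring by (simp add: is_subring_def)
  have R0: "0 \<in> ?R" using subring by (simp add: is_subring_def)
  have idR: "\<And>A. lt_ideal UNIV A \<Longrightarrow> lt_ideal ?R (A \<inter> ?R)"
    unfolding lt_ideal_def using Rsub R0 by auto
  have fsR: "fundamental_system ?R (\<lambda>n. I n \<inter> ?R)"
    unfolding fundamental_system_def using idR[OF Iid] Icap by blast
  have complR: "lt_complete ?R (\<lambda>n. I n \<inter> ?R)"
    unfolding lt_complete_def
  proof (intro conjI allI impI)
    show "(\<Inter>n. I n \<inter> ?R) = {0}" using Iint R0 by blast
  next
    fix x :: "'a set \<Rightarrow> 'a"
    assume h: "(\<forall>a. open_ideal ?R (\<lambda>n. I n \<inter> ?R) a \<longrightarrow> x a \<in> ?R) \<and>
      (\<forall>a b. open_ideal ?R (\<lambda>n. I n \<inter> ?R) a \<and> open_ideal ?R (\<lambda>n. I n \<inter> ?R) b \<and> a \<subseteq> b \<longrightarrow> x a - x b \<in> b)"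
    have opR: "\<And>A. open_ideal UNIV I A \<Longrightarrow> open_ideal ?R (\<lambda>n. I n \<inter> ?R) (A \<inter> ?R)"
      unfolding open_ideal_def using idR by blast
    have h1: "\<And>a. open_ideal ?R (\<lambda>n. I n \<inter> ?R) a \<Longrightarrow> x a \<in> ?R" using h by blast
    have h2: "\<And>a b. open_ideal ?R (\<lambda>n. I n \<inter> ?R) a \<Longrightarrow> open_ideal ?R (\<lambda>n. I n \<inter> ?R) b \<Longrightarrow> a \<subseteq> b \<Longrightarrow> x a - x b \<in> b"
      using h by blast
    have c2: "\<forall>x :: 'a set \<Rightarrow> 'a.
        (\<forall>a. open_ideal UNIV I a \<longrightarrow> x a \<in> UNIV) \<and>
        (\<forall>a b. open_ideal UNIV I a \<and> open_ideal UNIV I b \<and> a \<subseteq> b \<longrightarrow> x a - x b \<in> b)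
        \<longrightarrow> (\<exists>y\<in>UNIV. \<forall>a. open_ideal UNIV I a \<longrightarrow> y - x a \<in> a)"
      using compl unfolding lt_complete_def by (elim conjE)
    have comp: "\<forall>a b. open_ideal UNIV I a \<and> open_ideal UNIV I b \<and> a \<subseteq> b \<longrightarrow> x (a \<inter> ?R) - x (b \<inter> ?R) \<in> b"
    proof (intro allI impI)
      fix a b assume ab: "open_ideal UNIV I a \<and> open_ideal UNIV I b \<and> a \<subseteq> b"
      have "x (a \<inter> ?R) - x (b \<inter> ?R) \<in> b \<inter> ?R"
        using ab by (intro h2 opR) auto
      then show "x (a \<inter> ?R) - x (b \<inter> ?R) \<in> b" by simp
    qed
    have "\<exists>y\<in>UNIV. \<forall>a. open_ideal UNIV I a \<longrightarrow> y - x (a \<inter> ?R) \<in> a"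
      using c2[rule_format, of "\<lambda>a. x (a \<inter> ?R)"] comp by simp
    then obtain y where y: "\<And>a. open_ideal UNIV I a \<Longrightarrow> y - x (a \<inter> ?R) \<in> a" by blast
    have opI: "\<And>n. open_ideal UNIV I (I n)" unfolding open_ideal_def using Iid by blast
    have opIR: "\<And>n. open_ideal ?R (\<lambda>n. I n \<inter> ?R) (I n \<inter> ?R)" using opR opI by blast
    have yn: "\<And>n. y - x (I n \<inter> ?R) \<in> I n" using y opI by blast
    have xn: "\<And>n. x (I n \<inter> ?R) \<in> ?R" using h1 opIR by blast
    have yR: "y \<in> ?R"
    proof (rule invI)
      fix i :: nat assume i: "i \<ge> 1"
      have "e i y \<in> I n" for n
      proof -
        obtain m where m: "\<forall>b\<in>I m. \<forall>i. e i b \<in> I n" using cont by blast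
        have "e i (y - x (I m \<inter> ?R)) \<in> I n" using m yn by blast
        moreover have "e i (x (I m \<inter> ?R)) = 0" using invD[OF xn i] .
        ultimately show ?thesis by (simp add: sub)
      qed
      then show "e i y = 0" using Iint by blast
    qed
    show "\<exists>y\<in>?R. \<forall>a. open_ideal ?R (\<lambda>n. I n \<inter> ?R) a \<longrightarrow> y - x a \<in> a"
    proof (intro bexI[OF _ yR] allI impI)
      fix a assume a: "open_ideal ?R (\<lambda>n. I n \<inter> ?R) a"
      then obtain n where n: "I n \<inter> ?R \<subseteq> a" and la: "lt_ideal ?R a" unfolding open_ideal_def by blast
      have "x (I n \<inter> ?R) - x a \<in> a" using h2[OF opIR a n] .
      moreover have "y - x (I n \<inter> ?R) \<in> ?R" using Rsub[OF yR xn] by simp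
      then have "y - x (I n \<inter> ?R) \<in> a" using yn n by blast
      ultimately have "(y - x (I n \<inter> ?R)) + (x (I n \<inter> ?R) - x a) \<in> a"
        using la unfolding lt_ideal_def by blast
      then show "y - x a \<in> a" by simp
    qed
  qed
  have partc: "(\<exists>J :: nat \<Rightarrow> 'a set. (\<forall>n. lt_prime_ideal UNIV (J n) \<and> open_ideal UNIV I (J n)) \<and>
          (\<forall>a. open_ideal UNIV I a \<longrightarrow> (\<exists>n. J n \<subseteq> a)))
       \<longrightarrow> factorially_closed ?R \<and> (\<forall>u. (\<exists>v. u * v = 1) \<longrightarrow> u \<in> ?R)"
  proof
    assume "\<exists>J :: nat \<Rightarrow> 'a set. (\<forall>n. lt_prime_ideal UNIV (J n) \<and> open_ideal UNIV I (J n)) \<and>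
          (\<forall>a. open_ideal UNIV I a \<longrightarrow> (\<exists>n. J n \<subseteq> a))"
    then obtain J :: "nat \<Rightarrow> 'a set" where Jp: "\<And>n. lt_prime_ideal UNIV (J n)" and Jo: "\<And>n. open_ideal UNIV I (J n)"
      and Jc: "\<And>a. open_ideal UNIV I a \<Longrightarrow> \<exists>n. J n \<subseteq> a" by blast
    have opI: "\<And>n. open_ideal UNIV I (I n)" unfolding open_ideal_def using Iid by blast
    have key: "b \<in> ?R" if bb: "b * b' \<in> ?R - {0}" for b b'
    proof (rule invI)
      fix i :: nat assume i: "i \<ge> 1"
      let ?c = "b * b'"
      obtain k0 where k0: "?c \<notin> I k0" using bb Iint by blast
      have "e i b \<in> I k" for k
      proof -
        obtain k' where k': "I k' \<subseteq> I k \<inter> I k0" using Icap by blast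
        obtain n where n: "J n \<subseteq> I k'" using Jc opI by blast
        have cn: "?c \<notin> J n" using n k' k0 by blast
        obtain m where m: "I m \<subseteq> J n" using Jo unfolding open_ideal_def by blast
        have fin: "finite {i. e i z \<notin> J n}" for z
        proof -
          obtain N where "\<forall>i\<ge>N. e i z \<in> I m" using restr by blast
          then have "{i. e i z \<notin> J n} \<subseteq> {..<N}" using m by (auto simp: not_less[symmetric])
          then show ?thesis using finite_subset by blast
        qed
        have "\<forall>k\<ge>1. (\<Sum>l\<le>k. e l b * e (k-l) b') = 0"
        proof (intro allI impI)
          fix k :: nat assume "k \<ge> 1"
          have "e k (b * b') = 0" using invD bb \<open>k \<ge> 1\<close> by blast
          then show "(\<Sum>l\<le>k. e l b * e (k-l) b') = 0" using mul[of k b b'] by simp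
        qed
        moreover have "e 0 b * e 0 b' \<notin> J n" using cn by (simp add: e0)
        ultimately have "e i b \<in> J n \<or> i = 0"
          by (intro poly_prime[OF Jp fin fin])
        then show ?thesis using i n k' by auto
      qed
      then show "e i b = 0" using Iint by blast
    qed
    have fc: "factorially_closed ?R"
      unfolding factorially_closed_def
    proof (intro allI impI conjI)
      fix b b' assume h: "b * b' \<in> ?R - {0}"
      show "b \<in> ?R" using key h .
      show "b' \<in> ?R" using key[of b' b] h by (simp add: mult.commute)
    qed
    have "u \<in> ?R" if "u * v = 1" for u v
    proof (cases "(1::'a) = 0")
      case True
      then have "u = 0" by (metis mult_1 mult_zero_left)
      then show ?thesis using R0 by simp
    next
      case False
      then have "u * v \<in> ?R - {0}" using that subring by (simp add: is_subring_def)
      then show ?thesis using fc unfolding factorially_closed_def by (metis (no_types, lifting))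
    qed
    then show "factorially_closed ?R \<and> (\<forall>u. (\<exists>v. u * v = 1) \<longrightarrow> u \<in> ?R)" using fc by auto
  qed
  have partb: "\<forall>i\<ge>1.
        (\<forall>x y. e i (x + y) = e i x + e i y) \<and>
        (\<forall>r\<in>invariants e. \<forall>x. e i (r * x) = r * e i x) \<and>
        (\<forall>n. \<exists>m. \<forall>b\<in>I m. e i b \<in> I n)"
  proof (intro allI impI conjI ballI)
    fix i n :: nat
    obtain m where "\<forall>b\<in>I m. \<forall>i. e i b \<in> I n" using cont by blast
    then show "\<exists>m. \<forall>b\<in>I m. e i b \<in> I n" by blast
  qed (simp_all add: add linear)
  show ?thesis
    using subring fsR complR partc partb by (intro conjI) assumption+
qed

end
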